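(* Let $d\in\mathbb R$ with $d>2$ and let \[ \mathsf s_d=\frac4{d(d-2)}\Big(\frac{\Gamma\big(\frac{d+1}2\big)}{\sqrt\pi\,\Gamma\big(\frac d2\big)}\Big)^{2/d}. \] For every nonnegative smooth function $u$ on $[0,\infty)$ with compact support, writing $v=u^{\frac{d+2}{d-2}}$, \[ 0\le \mathsf s_d\Big(\int_0^\infty u^{\frac{2d}{d-2}}r^{d-1}dr\Big)^{1+\frac2d}-\int_0^\infty v\,\big((-\Delta)^{-1}v\big)\,r^{d-1}dr \] and \[ \mathsf s_d\Big(\int_0^\infty u^{\frac{2d}{d-2}}r^{d-1}dr\Big)^{1+\frac2d}-\int_0^\infty v\,\big((-\Delta)^{-1}v\big)\,r^{d-1}dr\le \mathsf c_d\Big(\int_0^\infty u^{\frac{2d}{d-2}}r^{d-1}dr\Big)^{\frac4d}\Big[\mathsf s_d\int_0^\infty|u'|^2r^{d-1}dr-\Big(\int_0^\infty u^{\frac{2d}{d-2}}r^{d-1}dr\Big)^{\frac{d-2}d}\Big] \] holds with $\mathsf c_d=\mathsf s_d$; in particular the optimal constant $\mathsf c_d$ in the second inequality satisfies $\mathsf c_d\le\mathsf s_d$.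
   Context: For a function $v$ on $(0,\infty)$ and real $d>2$, $(-\Delta)^{-1}v$ denotes the function $w(r)=\int_r^\infty s^{1-d}\int_0^s v(t)\,t^{d-1}\,dt\,ds$, i.e. the solution of $w''+\frac{d-1}{r}w'+v=0$ decaying at infinity. *)

theory Defs
  imports "HOL-Analysis.Analysis"
begin

definition sd :: "real \<Rightarrow> real" where
  "sd d = 4 / (d * (d - 2)) * (Gamma ((d + 1) / 2) / (sqrt pi * Gamma (d / 2))) powr (2 / d)"

definition smooth_halfline :: "(real \<Rightarrow> real) \<Rightarrow> bool" where
  "smooth_halfline u \<longleftrightarrow>
     (\<exists>D :: nat \<Rightarrow> real \<Rightarrow> real. (\<forall>x\<ge>0. D 0 x = u x) \<and>
        (\<forall>n x. x \<ge> 0 \<longrightarrow> (D n has_real_derivative D (Suc n) x) (at x within {0..})))"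

definition compact_support_halfline :: "(real \<Rightarrow> real) \<Rightarrow> bool" where
  "compact_support_halfline u \<longleftrightarrow> (\<exists>R. \<forall>r\<ge>R. u r = 0)"

definition inv_lap :: "real \<Rightarrow> (real \<Rightarrow> real) \<Rightarrow> real \<Rightarrow> real" where
  "inv_lap d v r = (LINT s:{r<..}|lborel. s powr (1 - d) * (LINT t:{0<..<s}|lborel. v t * t powr (d - 1)))"

end

theory Submission
  imports Defs
begin




lemma tail_powr:
  fixes e X :: real
  assumes "e < -1" "X > 0"
  shows "set_integrable lborel {X<..} (\<lambda>s. s powr e)"
    and "(LINT s:{X<..}|lborel. s powr e) = -(X powr (e+1))/(e+1)"
proof -
  have hi: "((\<lambda>x. x powr e) has_integral -(X powr (e+1))/(e+1)) {X..}"
    using has_integral_powr_to_inf[OF assms] .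
  have ai: "(\<lambda>x. x powr e) absolutely_integrable_on {X..}"
    using hi by (intro nonnegative_absolutely_integrable_1) (auto simp: integrable_on_def)
  have meas: "(\<lambda>x. indicator {X..} x *\<^sub>R (x powr e)) \<in> borel_measurable lborel"
    by measurable
  have si: "set_integrable lborel {X..} (\<lambda>s. s powr e)"
    using ai meas unfolding set_integrable_def
    using integrable_completion by blast
  show si2: "set_integrable lborel {X<..} (\<lambda>s. s powr e)"
    by (rule set_integrable_subset[OF si]) auto
  have "(LINT s:{X<..}|lborel. s powr e) = integral {X<..} (\<lambda>s. s powr e)"
    using set_borel_integral_eq_integral(2)[OF si2] .
  also have "\<dots> = integral {X..} (\<lambda>s. s powr e)"
  proof -
    have "negligible {X}" by simp
    then show ?thesis
      by (intro integral_spike_set) (auto intro: negligible_subset)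
  qed
  also have "\<dots> = -(X powr (e+1))/(e+1)" using hi by (rule integral_unique)
  finally show "(LINT s:{X<..}|lborel. s powr e) = -(X powr (e+1))/(e+1)" .
qed



lemma integral_Ioc_Icc:
  fixes f :: "real \<Rightarrow> real"
  shows "integral {a<..b} f = integral {a..b} f"
proof -
  have "negligible {a}" by simp
  then show ?thesis by (intro integral_spike_set) (auto intro: negligible_subset)
qed

lemma lint_compact:
  fixes F G :: "real \<Rightarrow> real"
  assumes R: "R > 0" and G: "continuous_on {0..R} G"
    and FG: "\<And>r. 0 < r \<Longrightarrow> r \<le> R \<Longrightarrow> F r = G r"
    and F0: "\<And>r. r > R \<Longrightarrow> F r = 0"
  shows "set_integrable lborel {0<..} F"
    and "(LINT r:{0<..}|lborel. F r) = integral {0..R} G"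
proof -
  have i1: "set_integrable lborel {0..R} G" by (rule borel_integrable_atLeastAtMost'[OF G])
  have i2: "set_integrable lborel {0<..R} G" by (rule set_integrable_subset[OF i1]) auto
  have i3: "set_integrable lborel {0<..R} F"
    using i2 set_integrable_cong[of lborel lborel "{0<..R}" "{0<..R}" F G] FG by auto
  have i4: "set_integrable lborel {R<..} F"
    using set_integrable_cong[of lborel lborel "{R<..}" "{R<..}" F "\<lambda>_. 0"] F0
    by (auto simp: set_integrable_def)
  have U: "{0<..} = {0<..R} \<union> {R<..}" using R by auto
  show si: "set_integrable lborel {0<..} F"
    unfolding U by (rule set_integrable_Un[OF i3 i4]) auto
  have "(LINT r:{0<..}|lborel. F r) = (LINT r:{0<..R}|lborel. F r) + (LINT r:{R<..}|lborel. F r)"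
    unfolding U by (rule set_integral_Un[OF _ i3 i4]) auto
  also have "(LINT r:{R<..}|lborel. F r) = 0"
    using set_lebesgue_integral_cong[of "{R<..}" lborel F "\<lambda>_. 0"] F0 by auto
  also have "(LINT r:{0<..R}|lborel. F r) = (LINT r:{0<..R}|lborel. G r)"
    by (rule set_lebesgue_integral_cong) (auto simp: FG)
  also have "\<dots> = integral {0<..R} G" by (rule set_borel_integral_eq_integral(2)[OF i2])
  also have "\<dots> = integral {0..R} G" by (rule integral_Ioc_Icc)
  finally show "(LINT r:{0<..}|lborel. F r) = integral {0..R} G" by simp
qed




lemmas hk_combine = Henstock_Kurzweil_Integration.integral_combine

lemma within_local:
  fixes x X :: real
  assumes "0 \<le> x" "x < X"
  shows "at x within {0..X} = at x within {0..}"
  by (rule at_within_nhd[of x "{..<X}"]) (use assms in auto)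

lemma interior_at:
  fixes x X :: real
  assumes "0 < x" "x < X"
  shows "at x within {0..X} = at x"
  by (rule at_within_interior) (use assms in auto)

locale radial =
  fixes d :: real and u du :: "real \<Rightarrow> real" and R :: real
  assumes d: "d > 2" and R: "R > 0"
    and du: "\<And>x. x \<ge> 0 \<Longrightarrow> (u has_real_derivative du x) (at x within {0..})"
    and cdu: "continuous_on {0..} du"
    and supp: "\<And>r. r \<ge> R \<Longrightarrow> u r = 0"
    and upos: "\<And>r. r \<ge> 0 \<Longrightarrow> u r \<ge> 0"
begin

definition "v = (\<lambda>r. u r powr ((d + 2) / (d - 2)))"
definition "rho r = r powr (d - 1)"
definition "m r = integral {0..r} (\<lambda>t. v t * rho t)"
definition "h r = r powr (1 - d) * m r"
definition "H r = integral {0..r} h"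
definition "mi = m R"
definition "w r = mi * R powr (2 - d) / (d - 2) + H R - H r"

lemma cu: "continuous_on {0..} u"
  unfolding continuous_on_eq_continuous_within
  using du DERIV_continuous by fastforce

lemma cv: "continuous_on {0..} v"
  unfolding v_def using d upos
  by (intro continuous_on_powr' cu continuous_on_const) (auto simp: field_simps)

lemma crho: "continuous_on {0..} rho"
  unfolding rho_def using d
  by (intro continuous_on_powr' continuous_on_id continuous_on_const) auto

lemma cvr: "continuous_on {0..X} (\<lambda>t. v t * rho t)"
  by (intro continuous_intros continuous_on_subset[OF cv] continuous_on_subset[OF crho]) auto

lemma intvr: "0 \<le> a \<Longrightarrow> (\<lambda>t. v t * rho t) integrable_on {a..b}"
  by (rule integrable_continuous_real, rule continuous_on_subset[OF cvr[of b]]) auto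

lemma v_nonneg: "v r \<ge> 0" unfolding v_def by simp

lemma v_supp: "r \<ge> R \<Longrightarrow> v r = 0" unfolding v_def using supp by simp

lemma rho_nonneg: "rho r \<ge> 0" unfolding rho_def by simp

lemma m_deriv: "0 \<le> x \<Longrightarrow> x \<le> X \<Longrightarrow> (m has_real_derivative (v x * rho x)) (at x within {0..X})"
  unfolding m_def by (rule integral_has_real_derivative[OF cvr]) auto

lemma m_deriv': "0 \<le> x \<Longrightarrow> (m has_real_derivative (v x * rho x)) (at x within {0..})"
  using m_deriv[of x "x+1"] within_local[of x "x+1"] by simp

lemma m_cont: "continuous_on {0..} m"
  unfolding continuous_on_eq_continuous_within
  using m_deriv' DERIV_continuous by fastforce

lemma m_nonneg: "m r \<ge> 0"
proof (cases "r \<ge> 0")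
  case True then show ?thesis
  unfolding m_def by (intro integral_nonneg intvr) (auto simp: v_nonneg rho_nonneg)
qed (simp add: m_def)

lemma m_mono: "0 \<le> r \<Longrightarrow> r \<le> r' \<Longrightarrow> m r \<le> m r'"
  unfolding m_def
  apply (rule integral_subset_le)
  apply simp
  apply (rule intvr, simp)
  apply (rule intvr, simp)
  by (auto simp: v_nonneg rho_nonneg)

lemma m_const: "r \<ge> R \<Longrightarrow> m r = mi"
proof -
  assume r: "r \<ge> R"
  have "integral {0..R} (\<lambda>t. v t * rho t) + integral {R..r} (\<lambda>t. v t * rho t) = integral {0..r} (\<lambda>t. v t * rho t)"
    by (rule hk_combine) (use r R in \<open>auto intro: intvr[of 0]\<close>)
  moreover have "integral {R..r} (\<lambda>t. v t * rho t) = 0"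
  proof -
    have "integral {R..r} (\<lambda>t. v t * rho t) = integral {R..r} (\<lambda>t. 0)"
      by (rule integral_cong) (simp add: v_supp)
    then show ?thesis by simp
  qed
  ultimately show ?thesis unfolding m_def mi_def by simp
qed

end



context radial begin

lemma dgt: "d > 2" using d .

lemma v_bound: obtains V where "V \<ge> 0" "\<And>r. 0 \<le> r \<Longrightarrow> r \<le> R \<Longrightarrow> v r \<le> V"
proof -
  obtain x where "x \<in> {0..R}" "\<forall>y\<in>{0..R}. v y \<le> v x"
    using continuous_attains_sup[of "{0..R}" v] continuous_on_subset[OF cv, of "{0..R}"] R by auto
  then show ?thesis using that[of "v x"] v_nonneg by auto
qed

lemma m_le:
  assumes V: "\<And>r. 0 \<le> r \<Longrightarrow> r \<le> R \<Longrightarrow> v r \<le> V" and r: "0 \<le> r" "r \<le> R"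
  shows "m r \<le> V * r powr d"
proof -
  have "m r \<le> integral {0..r} (\<lambda>t. V * r powr (d - 1))"
    unfolding m_def
  proof (rule integral_le[OF intvr])
    fix t assume t: "t \<in> {0..r}"
    have "rho t \<le> r powr (d - 1)" unfolding rho_def using t dgt by (intro powr_mono2) auto
    moreover have "v t \<le> V" using V t r by auto
    ultimately show "v t * rho t \<le> V * r powr (d - 1)"
      using v_nonneg[of t] by (intro mult_mono) (auto simp: rho_nonneg)
  qed auto
  also have "\<dots> = V * r powr d"
  proof (cases "r = 0")
    case False
    have "r powr (d - 1) * r = r powr (d - 1) * r powr 1" using r False by simp
    also have "\<dots> = r powr (d - 1 + 1)" by (rule powr_add[symmetric])
    finally have "r powr (d - 1) * r = r powr d" by simp
    then show ?thesis using r by (simp add: mult.commute)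
  qed simp
  finally show ?thesis .
qed

lemma h_le:
  assumes V: "\<And>r. 0 \<le> r \<Longrightarrow> r \<le> R \<Longrightarrow> v r \<le> V" and r: "0 \<le> r" "r \<le> R"
  shows "h r \<le> V * r"
proof (cases "r = 0")
  case False
  have "h r \<le> r powr (1 - d) * (V * r powr d)"
    unfolding h_def using m_le[OF V r] by (intro mult_left_mono) auto
  also have "\<dots> = V * (r powr (1 - d) * r powr d)" by simp
  also have "r powr (1 - d) * r powr d = r" using False r by (simp flip: powr_add)
  finally show ?thesis by simp
qed (simp add: h_def)

lemma h_nonneg: "h r \<ge> 0" unfolding h_def by (simp add: m_nonneg)

lemma h_cont: "continuous_on {0..} h"
proof -
  obtain V where V0: "V \<ge> 0" and V: "\<And>r. 0 \<le> r \<Longrightarrow> r \<le> R \<Longrightarrow> v r \<le> V" using v_bound by blast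
  have c1: "continuous_on {0<..} h"
    unfolding h_def
    by (intro continuous_intros continuous_on_powr' continuous_on_subset[OF m_cont]) auto
  show ?thesis unfolding continuous_on_eq_continuous_within
  proof
    fix x :: real assume x: "x \<in> {0..}"
    show "continuous (at x within {0..}) h"
    proof (cases "x = 0")
      case False
      then have "isCont h x" using c1 x continuous_on_eq_continuous_at[of "{0<..}" h] by auto
      then show ?thesis by (rule continuous_at_imp_continuous_within)
    next
      case True
      have ev: "eventually (\<lambda>r. 0 \<le> h r \<and> h r \<le> V * r) (at 0 within {0..})"
        unfolding eventually_at using R
        by (intro exI[of _ R]) (auto intro!: h_le[OF V] simp: h_nonneg dist_real_def)
      have "(h \<longlongrightarrow> 0) (at 0 within {0..})"
      proof (rule tendsto_sandwich[of "\<lambda>_. 0" h _ "\<lambda>r. V * r"])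
        show "\<forall>\<^sub>F n in at 0 within {0..}. 0 \<le> h n" using ev by (rule eventually_mono) auto
        show "\<forall>\<^sub>F n in at 0 within {0..}. h n \<le> V * n" using ev by (rule eventually_mono) auto
        show "((\<lambda>r. V * r) \<longlongrightarrow> 0) (at 0 within {0..})"
          by (rule tendsto_eq_intros) (auto intro: tendsto_ident_at)
      qed auto
      then show ?thesis using True by (simp add: continuous_within h_def)
    qed
  qed
qed

lemma inth: "h integrable_on {a..b}" if "0 \<le> a" for a b
  by (rule integrable_continuous_real, rule continuous_on_subset[OF h_cont]) (use that in auto)

lemma H_deriv: "0 \<le> x \<Longrightarrow> x \<le> X \<Longrightarrow> (H has_real_derivative h x) (at x within {0..X})"
  unfolding H_def by (rule integral_has_real_derivative) (auto intro: continuous_on_subset[OF h_cont])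

lemma m_tail: "r \<ge> R \<Longrightarrow> m r = mi" by (rule m_const)

lemma h_tail: "r \<ge> R \<Longrightarrow> h r = mi * r powr (1 - d)"
  unfolding h_def using m_tail by simp

lemma H_tail: assumes r: "R \<le> r" shows "H r = H R + mi * (R powr (2 - d) - r powr (2 - d)) / (d - 2)"
proof -
  let ?F = "\<lambda>s. - mi * s powr (2 - d) / (d - 2)"
  have "(h has_integral (?F r - ?F R)) {R..r}"
  proof (rule fundamental_theorem_of_calculus)
    fix s assume s: "s \<in> {R..r}"
    then have s0: "s > 0" using R by auto
    have "(?F has_real_derivative (- mi * ((2 - d) * s powr (2 - d - 1)) / (d - 2))) (at s)"
      using s0 dgt by (auto intro!: derivative_eq_intros)
    moreover have "- mi * ((2 - d) * s powr (2 - d - 1)) / (d - 2) = h s"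
      using h_tail[of s] s dgt by (auto simp: field_simps)
    ultimately show "(?F has_vector_derivative h s) (at s within {R..r})"
      by (auto simp: has_real_derivative_iff_has_vector_derivative intro: has_vector_derivative_at_within)
  qed (use r in auto)
  then have "integral {R..r} h = ?F r - ?F R" by (rule integral_unique)
  moreover have "integral {0..R} h + integral {R..r} h = integral {0..r} h"
    by (rule hk_combine) (use r R in \<open>auto intro: inth\<close>)
  moreover have "?F r - ?F R = mi * (R powr (2 - d) - r powr (2 - d)) / (d - 2)"
    by (simp add: diff_divide_distrib right_diff_distrib)
  ultimately show ?thesis unfolding H_def by linarith
qed

lemma w_tail: "R \<le> r \<Longrightarrow> w r = mi * r powr (2 - d) / (d - 2)"
  unfolding w_def using H_tail dgt by (simp add: field_simps)

lemma w_deriv: "0 \<le> x \<Longrightarrow> x \<le> X \<Longrightarrow> (w has_real_derivative - h x) (at x within {0..X})"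
  unfolding w_def by (auto intro!: derivative_eq_intros H_deriv)

lemma w_deriv': "0 \<le> x \<Longrightarrow> (w has_real_derivative - h x) (at x within {0..})"
  using w_deriv[of x "x+1"] within_local[of x "x+1"] by simp

lemma w_at: "0 < x \<Longrightarrow> (w has_real_derivative - h x) (at x)"
  using w_deriv[of x "x+1"] interior_at[of x "x+1"] by simp

lemma w_cont: "continuous_on {0..} w"
  unfolding continuous_on_eq_continuous_within
  using w_deriv' DERIV_continuous by fastforce

lemma mi_nonneg: "mi \<ge> 0" unfolding mi_def by (rule m_nonneg)

lemma w_nonneg: assumes r: "0 \<le> r" shows "w r \<ge> 0"
proof (cases "r \<le> R")
  case True
  have "integral {0..r} h + integral {r..R} h = integral {0..R} h"
    by (rule hk_combine) (use r True in \<open>auto intro: inth\<close>)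
  moreover have "integral {r..R} h \<ge> 0"
    by (rule integral_nonneg) (auto intro: inth[OF r] simp: h_nonneg)
  moreover have "mi * R powr (2 - d) / (d - 2) \<ge> 0" using mi_nonneg dgt by simp
  ultimately show ?thesis unfolding w_def H_def by linarith
next
  case False
  then show ?thesis using w_tail[of r] mi_nonneg dgt by auto
qed

end



context radial begin

lemma inner_eq:
  assumes s: "s > 0"
  shows "(LINT t:{0<..<s}|lborel. v t * t powr (d - 1)) = m s"
proof -
  have i1: "set_integrable lborel {0..s} (\<lambda>t. v t * rho t)"
    by (rule borel_integrable_atLeastAtMost'[OF cvr])
  have i2: "set_integrable lborel {0<..<s} (\<lambda>t. v t * rho t)"
    by (rule set_integrable_subset[OF i1]) auto
  have "(LINT t:{0<..<s}|lborel. v t * t powr (d - 1)) = (LINT t:{0<..<s}|lborel. v t * rho t)"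
    by (simp add: rho_def)
  also have "\<dots> = integral {0<..<s} (\<lambda>t. v t * rho t)"
    by (rule set_borel_integral_eq_integral(2)[OF i2])
  also have "\<dots> = m s" unfolding m_def by (simp flip: integral_open_interval_real)
  finally show ?thesis .
qed

lemma inv_lap_eq:
  assumes r: "r > 0"
  shows "inv_lap d v r = w r"
proof -
  define X where "X = max r R + 1"
  have X: "X > r" "X \<ge> R" "X > 0" unfolding X_def using R by auto
  have "inv_lap d v r = (LINT s:{r<..}|lborel. h s)"
    unfolding inv_lap_def h_def
    by (rule set_lebesgue_integral_cong) (use r in \<open>auto simp: inner_eq\<close>)
  also have U: "{r<..} = {r<..X} \<union> {X<..}" using X by auto
  have i1: "set_integrable lborel {r<..X} h"
  proof (rule set_integrable_subset)
    show "set_integrable lborel {r..X} h"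
      by (rule borel_integrable_atLeastAtMost', rule continuous_on_subset[OF h_cont]) (use r in auto)
  qed auto
  have tl: "set_integrable lborel {X<..} (\<lambda>s. s powr (1 - d))"
    "(LINT s:{X<..}|lborel. s powr (1 - d)) = -(X powr (1 - d + 1))/(1 - d + 1)"
    using tail_powr[of "1 - d" X] dgt X by auto
  have hX: "\<And>s. s \<in> {X<..} \<Longrightarrow> h s = mi * s powr (1 - d)" using h_tail X by auto
  have i2: "set_integrable lborel {X<..} h"
    using set_integrable_cong[of lborel lborel "{X<..}" "{X<..}" h "\<lambda>s. mi * s powr (1 - d)"] hX tl(1)
    by auto
  have "(LINT s:{r<..}|lborel. h s) = (LINT s:{r<..X}|lborel. h s) + (LINT s:{X<..}|lborel. h s)"
    unfolding U by (rule set_integral_Un[OF _ i1 i2]) auto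
  also have "(LINT s:{r<..X}|lborel. h s) = integral {r..X} h"
    using set_borel_integral_eq_integral(2)[OF i1] integral_Ioc_Icc by simp
  also have "(LINT s:{X<..}|lborel. h s) = (LINT s:{X<..}|lborel. mi * s powr (1 - d))"
    by (rule set_lebesgue_integral_cong) (auto simp: hX)
  also have "\<dots> = mi * X powr (2 - d) / (d - 2)"
  proof -
    have e: "(LINT s:{X<..}|lborel. s powr (1 - d)) = X powr (2 - d) / (d - 2)"
      using tl(2) dgt by (simp add: field_simps)
    show ?thesis by (simp add: e)
  qed
  also have "integral {r..X} h = H X - H r"
    using hk_combine[of 0 r X h] inth[of 0 X] r X unfolding H_def by auto
  also have "H X - H r + mi * X powr (2 - d) / (d - 2) = w r"
    unfolding w_def using H_tail[of X] X dgt by (simp add: field_simps)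
  finally show ?thesis .
qed

end



lemma hasint_cont: "continuous_on {a..b} f \<Longrightarrow> (f has_integral integral {a..b} f) {a..b}"
  for f :: "real \<Rightarrow> real"
  by (rule integrable_integral[OF integrable_continuous_real])

context radial begin

definition "q = 2 * d / (d - 2)"
definition "N = integral {0..R} (\<lambda>r. u r powr q * rho r)"
definition "Dn = integral {0..R} (\<lambda>r. (du r)\<^sup>2 * rho r)"
definition "J = integral {0..R} (\<lambda>r. v r * w r * rho r)"
definition "I X = integral {0..X} (\<lambda>r. (h r)\<^sup>2 * rho r)"

lemma sub0: "{0..X} \<subseteq> {(0::real)..}" by auto

lemma cuq: "continuous_on {0..} (\<lambda>r. u r powr q)"
  unfolding q_def using dgt upos
  by (intro continuous_on_powr' cu continuous_on_const) (auto simp: field_simps)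

lemma m0: "m 0 = 0" unfolding m_def by simp

lemma hrho: "0 \<le> r \<Longrightarrow> h r * rho r = m r"
proof (cases "r = 0")
  case False
  assume r: "0 \<le> r"
  have "r powr (1 - d) * r powr (d - 1) = 1" using False r by (simp flip: powr_add)
  then show ?thesis unfolding h_def rho_def by (metis mult.assoc mult.commute mult.left_neutral)
qed (simp add: h_def rho_def m0)

lemma uv: "0 \<le> r \<Longrightarrow> u r * v r = u r powr q"
proof (cases "u r = 0")
  case False
  assume "0 \<le> r"
  then have "u r \<ge> 0" by (rule upos)
  then have "u r * v r = u r powr 1 * u r powr ((d + 2) / (d - 2))"
    unfolding v_def using False by simp
  also have "\<dots> = u r powr (1 + (d + 2) / (d - 2))" by (rule powr_add[symmetric])
  also have "1 + (d + 2) / (d - 2) = q" unfolding q_def using dgt by (simp add: field_simps)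
  finally show ?thesis .
qed (simp add: v_def)

lemma P1:
  assumes X: "X \<ge> R"
  shows "J = mi * w X + I X"
proof -
  have X0: "X \<ge> 0" using X R by auto
  have cvwr: "continuous_on {0..X} (\<lambda>x. v x * w x * rho x)"
    by (intro continuous_intros continuous_on_subset[OF cv sub0] continuous_on_subset[OF w_cont sub0]
        continuous_on_subset[OF crho sub0])
  have ch2: "continuous_on {0..X} (\<lambda>x. (h x)\<^sup>2 * rho x)"
    by (intro continuous_intros continuous_on_subset[OF h_cont sub0] continuous_on_subset[OF crho sub0])
  have ftc: "((\<lambda>x. v x * rho x * w x + m x * (- h x)) has_integral (m X * w X - m 0 * w 0)) {0..X}"
  proof (rule fundamental_theorem_of_calculus[OF X0])
    fix x assume x: "x \<in> {0..X}"
    have "((\<lambda>r. m r * w r) has_real_derivative (v x * rho x * w x + m x * (- h x))) (at x within {0..X})"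
      using m_deriv[of x X] w_deriv[of x X] x by (auto intro!: derivative_eq_intros)
    then show "((\<lambda>r. m r * w r) has_vector_derivative (v x * rho x * w x + m x * (- h x))) (at x within {0..X})"
      by (simp add: has_real_derivative_iff_has_vector_derivative)
  qed
  have A0: "integral {0..X} (\<lambda>x. v x * w x * rho x) = J"
  proof -
    have "integral {0..R} (\<lambda>x. v x * w x * rho x) + integral {R..X} (\<lambda>x. v x * w x * rho x)
          = integral {0..X} (\<lambda>x. v x * w x * rho x)"
      by (rule hk_combine) (use X R cvwr in \<open>auto intro: integrable_continuous_real\<close>)
    moreover have "integral {R..X} (\<lambda>x. v x * w x * rho x) = integral {R..X} (\<lambda>x. 0)"
      by (rule integral_cong) (simp add: v_supp)
    ultimately show ?thesis unfolding J_def by simp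
  qed
  have A: "((\<lambda>x. v x * w x * rho x) has_integral J) {0..X}"
    using hasint_cont[OF cvwr] A0 by simp
  have B: "((\<lambda>x. (h x)\<^sup>2 * rho x) has_integral I X) {0..X}"
    unfolding I_def by (rule hasint_cont[OF ch2])
  have C: "((\<lambda>x. v x * rho x * w x + m x * (- h x)) has_integral (J - I X)) {0..X}"
  proof (rule has_integral_eq[OF _ has_integral_diff[OF A B]])
    fix x assume x: "x \<in> {0..X}"
    then have "m x = h x * rho x" using hrho by auto
    then show "v x * w x * rho x - (h x)\<^sup>2 * rho x = v x * rho x * w x + m x * (- h x)"
      by (simp add: power2_eq_square algebra_simps)
  qed
  have "J - I X = m X * w X - m 0 * w 0" using has_integral_unique[OF C ftc] .
  then show ?thesis using m0 m_tail[OF X] by simp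
qed

lemma P2: "integral {0..R} (\<lambda>r. du r * m r) = - N"
proof -
  have R0: "0 \<le> R" using R by simp
  have c1: "continuous_on {0..R} (\<lambda>x. du x * m x)"
    by (intro continuous_intros continuous_on_subset[OF cdu sub0] continuous_on_subset[OF m_cont sub0])
  have c2: "continuous_on {0..R} (\<lambda>x. u x powr q * rho x)"
    by (intro continuous_intros continuous_on_subset[OF cuq sub0] continuous_on_subset[OF crho sub0])
  have ftc: "((\<lambda>x. du x * m x + u x * (v x * rho x)) has_integral (u R * m R - u 0 * m 0)) {0..R}"
  proof (rule fundamental_theorem_of_calculus[OF R0])
    fix x assume x: "x \<in> {0..R}"
    have du': "(u has_real_derivative du x) (at x within {0..R})"
      using du[of x] x by (auto intro: DERIV_subset)
    have "((\<lambda>r. u r * m r) has_real_derivative (du x * m x + u x * (v x * rho x))) (at x within {0..R})"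
      using m_deriv[of x R] du' x by (auto intro!: derivative_eq_intros)
    then show "((\<lambda>r. u r * m r) has_vector_derivative (du x * m x + u x * (v x * rho x))) (at x within {0..R})"
      by (simp add: has_real_derivative_iff_has_vector_derivative)
  qed
  have C: "((\<lambda>x. du x * m x + u x * (v x * rho x)) has_integral (integral {0..R} (\<lambda>r. du r * m r) + N)) {0..R}"
    unfolding N_def
  proof (rule has_integral_eq[OF _ has_integral_add[OF hasint_cont[OF c1] hasint_cont[OF c2]]])
    fix x assume "x \<in> {0..R}"
    then show "du x * m x + u x powr q * rho x = du x * m x + u x * (v x * rho x)"
      using uv[of x] by (simp add: mult.assoc)
  qed
  have "integral {0..R} (\<lambda>r. du r * m r) + N = u R * m R - u 0 * m 0"
    using has_integral_unique[OF C ftc] .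
  then show ?thesis using m0 supp[of R] by simp
qed

lemma I_nonneg: "I X \<ge> 0"
proof (cases "X \<ge> 0")
  case True
  have ch2: "continuous_on {0..X} (\<lambda>x. (h x)\<^sup>2 * rho x)"
    by (intro continuous_intros continuous_on_subset[OF h_cont sub0] continuous_on_subset[OF crho sub0])
  show ?thesis unfolding I_def
    by (rule integral_nonneg[OF integrable_continuous_real[OF ch2]]) (simp add: rho_nonneg)
qed (simp add: I_def)

lemma J_ge_I: "J \<ge> I R"
  using P1[of R] mi_nonneg w_nonneg[of R] R by simp

lemma square_ineq: "0 \<le> \<alpha>\<^sup>2 * Dn - 2 * \<alpha> * N + J"
proof -
  have c: "continuous_on {0..R} (\<lambda>x. (\<alpha> * du x + h x)\<^sup>2 * rho x)"
    by (intro continuous_intros continuous_on_subset[OF h_cont sub0] continuous_on_subset[OF crho sub0]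
      continuous_on_subset[OF cdu sub0])
  have c1: "continuous_on {0..R} (\<lambda>x. (du x)\<^sup>2 * rho x)"
    by (intro continuous_intros continuous_on_subset[OF crho sub0] continuous_on_subset[OF cdu sub0])
  have c2: "continuous_on {0..R} (\<lambda>x. du x * m x)"
    by (intro continuous_intros continuous_on_subset[OF cdu sub0] continuous_on_subset[OF m_cont sub0])
  have ch2: "continuous_on {0..R} (\<lambda>x. (h x)\<^sup>2 * rho x)"
    by (intro continuous_intros continuous_on_subset[OF h_cont sub0] continuous_on_subset[OF crho sub0])
  have S: "((\<lambda>x. \<alpha>\<^sup>2 * ((du x)\<^sup>2 * rho x) + (2 * \<alpha>) * (du x * m x) + (h x)\<^sup>2 * rho x)
      has_integral (\<alpha>\<^sup>2 * Dn + (2 * \<alpha>) * (- N) + I R)) {0..R}"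
    unfolding Dn_def I_def P2[symmetric]
    by (intro has_integral_add has_integral_mult_right hasint_cont c1 c2 ch2)
  have "((\<lambda>x. (\<alpha> * du x + h x)\<^sup>2 * rho x) has_integral (\<alpha>\<^sup>2 * Dn + (2 * \<alpha>) * (- N) + I R)) {0..R}"
  proof (rule has_integral_eq[OF _ S])
    fix x assume x: "x \<in> {0..R}"
    then have "m x = h x * rho x" using hrho by auto
    then show "\<alpha>\<^sup>2 * ((du x)\<^sup>2 * rho x) + (2 * \<alpha>) * (du x * m x) + (h x)\<^sup>2 * rho x = (\<alpha> * du x + h x)\<^sup>2 * rho x"
      by (simp add: power2_eq_square algebra_simps)
  qed
  then have "0 \<le> \<alpha>\<^sup>2 * Dn + (2 * \<alpha>) * (- N) + I R"
    by (rule has_integral_nonneg) (simp add: rho_nonneg)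
  then show ?thesis using J_ge_I by simp
qed

end



lemma beta_int:
  fixes k :: real
  assumes k: "k > 0"
  shows "((\<lambda>x. x * sqrt (1 - x powr k)) has_integral (Beta (2/k) (3/2) / k)) {0..1}"
proof -
  let ?f = "\<lambda>x::real. x * sqrt (1 - x powr k)"
  let ?g = "\<lambda>y::real. y powr (1/k)"
  let ?g' = "\<lambda>y::real. (1/k) * y powr (1/k - 1)"
  have cf: "continuous_on {0..1} ?f"
    using k by (intro continuous_intros continuous_on_powr') auto
  have sub: "((\<lambda>y. ?g' y *\<^sub>R ?f (?g y)) has_integral (integral {?g 0..?g 1} ?f)) {0..1}"
  proof (rule has_integral_substitution_strong[of "{0}" 0 1 ?g 0 1 ?f ?g'])
    show "?g ` {0..1} \<subseteq> {0..1}"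
      using k powr_mono2[of "1/k" _ 1] by fastforce
    show "continuous_on {0..1} ?g"
      using k by (intro continuous_on_powr' continuous_intros) auto
    fix x :: real assume x: "x \<in> {0..1} - {0}"
    then have "x > 0" by auto
    then show "(?g has_field_derivative ?g' x) (at x within {0..1})"
      by (auto intro!: derivative_eq_intros)
  qed (use cf in auto)
  then have sub': "((\<lambda>y. ?g' y *\<^sub>R ?f (?g y)) has_integral (integral {0..1} ?f)) {0..1}"
    by simp
  have B: "((\<lambda>t. t powr (2/k - 1) * (1 - t) powr (3/2 - 1)) has_integral Beta (2/k) (3/2)) {0..1}"
    using has_integral_Beta_real[of "2/k" "3/2"] k by simp
  have B': "((\<lambda>y. ?g' y *\<^sub>R ?f (?g y)) has_integral (1/k) * Beta (2/k) (3/2)) {0..1}"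
  proof (rule has_integral_eq[OF _ has_integral_mult_right[OF B]])
    fix y :: real assume y: "y \<in> {0..1}"
    show "(1/k) * (y powr (2/k - 1) * (1 - y) powr (3/2 - 1)) = ?g' y *\<^sub>R ?f (?g y)"
    proof (cases "y = 0")
      case False
      then have y0: "y > 0" using y by auto
      have e1: "(y powr (1/k)) powr k = y" using k y0 by (simp add: powr_powr)
      have e2: "(1 - y) powr (3/2 - 1) = sqrt (1 - y)" using y by (simp add: powr_half_sqrt)
      have e3: "y powr (1/k - 1) * y powr (1/k) = y powr (2/k - 1)"
        by (simp add: powr_add[symmetric])
      show ?thesis using e1 e2 e3[symmetric] by (simp add: algebra_simps)
    qed simp
  qed
  have "integral {0..1} ?f = Beta (2/k) (3/2) / k"
    using has_integral_unique[OF sub' B'] by simp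
  then show ?thesis using integrable_integral[OF integrable_continuous_real[OF cf]] by simp
qed

lemma Gamma_three_halves: "Gamma (3/2 :: real) = sqrt pi / 2"
proof -
  have "Gamma ((1/2::real) + 1) = (1/2) * Gamma (1/2)"
    by (rule Gamma_plus1) auto
  then show ?thesis by (simp add: Gamma_one_half_real)
qed

lemma beta_const:
  fixes d :: real assumes d: "d > 2"
  shows "Beta ((d - 2) / 2) (3/2) * (d - 2) = sqrt pi * Gamma (d/2) / Gamma ((d+1)/2)"
proof -
  have g1: "Gamma ((d - 2)/2 + 1) = (d - 2)/2 * Gamma ((d - 2)/2)"
    by (rule Gamma_plus1) (use d in auto)
  have g2: "(d - 2)/2 + 1 = d/2" by argo
  have g3: "(d - 2)/2 + 3/2 = (d+1)/2" by argo
  have "Beta ((d - 2) / 2) (3/2) = Gamma ((d - 2)/2) * Gamma (3/2) / Gamma ((d+1)/2)"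
    unfolding Beta_altdef rGamma_inverse_Gamma g3 by (simp add: field_simps)
  also have "\<dots> = sqrt pi / 2 * Gamma ((d - 2)/2) / Gamma ((d+1)/2)"
    by (simp add: Gamma_three_halves)
  finally have "Beta ((d - 2) / 2) (3/2) * (d - 2) = sqrt pi * ((d - 2)/2 * Gamma ((d - 2)/2)) / Gamma ((d+1)/2)"
    by simp
  also have "(d - 2)/2 * Gamma ((d - 2)/2) = Gamma (d/2)" using g1 g2 by simp
  finally show ?thesis .
qed




lemma amgm:
  fixes d C M W :: real
  assumes d: "d > 2" and C: "C > 0" and M: "M > 0" and W: "W \<ge> 0"
  shows "(d - 2)/2 * C * M powr 2 + ((d - 2)/2)\<^sup>2 * W * M powr (- (4/(d - 2)))
         \<ge> (d * (d - 2) / 4) * C powr (2/d) * W powr ((d - 2)/d)"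
proof (cases "W = 0")
  case True
  then show ?thesis using d C M by simp
next
  case False
  then have W0: "W > 0" using W by simp
  define K where "K = d * (d - 2) / 4"
  define al where "al = 2 / d"
  define be where "be = (d - 2) / d"
  define k where "k = 4 / (d - 2)"
  have K0: "K > 0" unfolding K_def using d by simp
  have albe: "al + be = 1" unfolding al_def be_def using d by (simp add: field_simps)
  define X where "X = K * C * M powr 2"
  define Y where "Y = K * W * M powr (- k)"
  have X0: "X > 0" unfolding X_def using K0 C M by simp
  have Y0: "Y > 0" unfolding Y_def using K0 W0 M by simp
  have young: "X powr al * Y powr be \<le> al * X + be * Y"
    by (rule Youngs_inequality_0) (use X0 Y0 albe d in \<open>auto simp: al_def be_def\<close>)
  have lhs: "al * X + be * Y = (d - 2)/2 * C * M powr 2 + ((d - 2)/2)\<^sup>2 * W * M powr (- (4/(d - 2)))"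
    unfolding al_def be_def X_def Y_def K_def k_def using d by (simp add: field_simps power2_eq_square)
  have Xp: "X powr al = K powr al * C powr al * M powr (2 * al)"
  proof -
    have "X powr al = (K * C) powr al * (M powr 2) powr al" unfolding X_def
      by (rule powr_mult; use K0 C M in auto)
    also have "(K * C) powr al = K powr al * C powr al" by (rule powr_mult; use K0 C in auto)
    also have "(M powr 2) powr al = M powr (2 * al)" by (rule powr_powr)
    finally show ?thesis .
  qed
  have Yp: "Y powr be = K powr be * W powr be * M powr (- k * be)"
    unfolding Y_def using K0 W0 M by (simp add: powr_mult powr_powr)
  have e1: "2 * al + (- k * be) = 0" unfolding al_def k_def be_def using d by (simp add: field_simps)
  have "X powr al * Y powr be = (K powr al * K powr be) * C powr al * W powr be * (M powr (2 * al) * M powr (- k * be))"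
    unfolding Xp Yp by (simp add: algebra_simps)
  also have "K powr al * K powr be = K" using albe K0 by (simp flip: powr_add)
  also have "M powr (2 * al) * M powr (- k * be) = 1" using e1 M by (simp flip: powr_add)
  finally have "X powr al * Y powr be = K * C powr al * W powr be" by simp
  then have "K * C powr al * W powr be \<le> (d - 2)/2 * C * M powr 2 + ((d - 2)/2)\<^sup>2 * W * M powr (- (4/(d - 2)))"
    using young lhs by linarith
  then show ?thesis unfolding K_def al_def be_def .
qed

lemma holder:
  fixes F G :: "real \<Rightarrow> real" and p q :: real
  assumes p: "p > 1" and q: "q > 1" and pq: "1/p + 1/q = 1" and ab: "a \<le> b"
    and cF: "continuous_on {a..b} F" and cG: "continuous_on {a..b} G"
    and F0: "\<And>x. x \<in> {a..b} \<Longrightarrow> F x \<ge> 0" and G0: "\<And>x. x \<in> {a..b} \<Longrightarrow> G x \<ge> 0"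
  shows "integral {a..b} (\<lambda>x. F x * G x)
         \<le> (integral {a..b} (\<lambda>x. F x powr p)) powr (1/p) * (integral {a..b} (\<lambda>x. G x powr q)) powr (1/q)"
proof -
  define A where "A = integral {a..b} (\<lambda>x. F x powr p)"
  define B where "B = integral {a..b} (\<lambda>x. G x powr q)"
  have cFp: "continuous_on {a..b} (\<lambda>x. F x powr p)"
    using p F0 by (intro continuous_on_powr' cF continuous_intros) auto
  have cGq: "continuous_on {a..b} (\<lambda>x. G x powr q)"
    using q G0 by (intro continuous_on_powr' cG continuous_intros) auto
  have cFG: "continuous_on {a..b} (\<lambda>x. F x * G x)" by (intro continuous_intros cF cG)
  have A0: "A \<ge> 0" unfolding A_def by (rule integral_nonneg[OF integrable_continuous_real[OF cFp]]) auto
  have B0: "B \<ge> 0" unfolding B_def by (rule integral_nonneg[OF integrable_continuous_real[OF cGq]]) auto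
  have lam: "integral {a..b} (\<lambda>x. F x * G x) \<le> l powr p * A / p + l powr (- q) * B / q" if l: "l > 0" for l
  proof -
    have "integral {a..b} (\<lambda>x. F x * G x) \<le> integral {a..b} (\<lambda>x. l powr p / p * F x powr p + l powr (- q) / q * G x powr q)"
    proof (rule integral_le)
      show "(\<lambda>x. F x * G x) integrable_on {a..b}" by (rule integrable_continuous_real[OF cFG])
      show "(\<lambda>x. l powr p / p * F x powr p + l powr (- q) / q * G x powr q) integrable_on {a..b}"
        by (intro integrable_continuous_real continuous_intros cFp cGq)
      fix x assume x: "x \<in> {a..b}"
      have "(l * F x) * (G x / l) \<le> (l * F x) powr p / p + (G x / l) powr q / q"
        by (rule Youngs_inequality) (use p q pq l F0 G0 x in auto)
      moreover have "(l * F x) * (G x / l) = F x * G x" using l by simp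
      moreover have "(l * F x) powr p = l powr p * F x powr p" using l F0 x by (simp add: powr_mult)
      moreover have "(G x / l) powr q = l powr (- q) * G x powr q"
      proof -
        have "(G x / l) powr q = G x powr q / l powr q" by (rule powr_divide; use l G0 x in auto)
        then show ?thesis by (simp add: powr_minus divide_inverse)
      qed
      ultimately show "F x * G x \<le> l powr p / p * F x powr p + l powr (- q) / q * G x powr q"
        by (simp add: field_simps)
    qed
    also have "\<dots> = l powr p / p * A + l powr (- q) / q * B"
      unfolding A_def B_def
      by (subst integral_add) (use p q in \<open>auto intro!: integrable_continuous_real continuous_intros cFp cGq\<close>)
    finally show ?thesis by simp
  qed
  show ?thesis
  proof (cases "A = 0 \<or> B = 0")
    case True
    have "integral {a..b} (\<lambda>x. F x * G x) \<le> 0"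
    proof (cases "A = 0")
      case True
      have l1: "((\<lambda>l. l powr (- q)) \<longlongrightarrow> 0) at_top"
        by (rule tendsto_neg_powr) (use q in \<open>auto intro: filterlim_ident\<close>)
      have "((\<lambda>l. l powr (- q) * B / q) \<longlongrightarrow> 0 * B / q) at_top"
        using q by (intro tendsto_intros l1) auto
      then have lim: "((\<lambda>l. l powr p * A / p + l powr (- q) * B / q) \<longlongrightarrow> 0) at_top"
        using True by simp
      show ?thesis
        by (rule tendsto_lowerbound[OF lim]) (auto intro!: eventually_mono[OF eventually_gt_at_top[of 0]] lam)
    next
      case False
      then have B: "B = 0" using \<open>A = 0 \<or> B = 0\<close> by simp
      have l1: "((\<lambda>l. l powr p) \<longlongrightarrow> 0 powr p) (at_right 0)"
        by (rule tendsto_powr') (use p in \<open>auto intro: tendsto_ident_at exI[of _ 1] simp: eventually_at_right_field\<close>)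
      have "((\<lambda>l. l powr p * A / p) \<longlongrightarrow> 0 powr p * A / p) (at_right 0)"
        using p by (intro tendsto_intros l1) auto
      then have lim: "((\<lambda>l. l powr p * A / p + l powr (- q) * B / q) \<longlongrightarrow> 0) (at_right 0)"
        using B by simp
      show ?thesis
        by (rule tendsto_lowerbound[OF lim])
           (auto intro!: lam exI[of _ 1] simp: eventually_at_right_field)
    qed
    then show ?thesis using True unfolding A_def[symmetric] B_def[symmetric] by auto
  next
    case False
    then have A1: "A > 0" and B1: "B > 0" using A0 B0 by auto
    define l where "l = (B / A) powr (1 / (p + q))"
    have l0: "l > 0" unfolding l_def using A1 B1 by simp
    have pq2: "p + q = p * q" using pq p q by (simp add: field_simps)
    have "l powr p * A = (B / A) powr (p / (p + q)) * A"
      unfolding l_def using A1 B1 by (simp add: powr_powr)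
    also have "p / (p + q) = 1 / q" using pq2 p by (simp add: field_simps)
    also have "(B / A) powr (1 / q) * A = B powr (1/q) * A powr (1 - 1/q)"
      using A1 B1 by (simp add: powr_divide powr_diff field_simps)
    also have "1 - 1/q = 1/p" using pq by simp
    finally have E1: "l powr p * A = A powr (1/p) * B powr (1/q)" by simp
    have "l powr (- q) * B = (B / A) powr (- q / (p + q)) * B"
      unfolding l_def using A1 B1 by (simp add: powr_powr)
    also have "- q / (p + q) = - (1 / p)" using pq2 q by (simp add: field_simps)
    also have "(B / A) powr (- (1 / p)) * B = A powr (1/p) * B powr (1 - 1/p)"
      using A1 B1 by (simp add: powr_divide powr_minus powr_diff field_simps)
    also have "1 - 1/p = 1/q" using pq by simp
    finally have E2: "l powr (- q) * B = A powr (1/p) * B powr (1/q)" by simp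
    have "integral {a..b} (\<lambda>x. F x * G x) \<le> l powr p * A / p + l powr (- q) * B / q" by (rule lam[OF l0])
    also have "\<dots> = A powr (1/p) * B powr (1/q) * (1/p + 1/q)" using E1 E2 by (simp add: field_simps)
    finally show ?thesis using pq unfolding A_def B_def by simp
  qed
qed




context radial begin

definition "aa = (d - 2) / 2"
definition "kk = 4 / (d - 2)"
definition "f r = r powr aa * w r"
definition "P r = r powr (d - 2) * (w r)\<^sup>2"
definition "F' x = aa * x powr (aa - 1) * w x - x powr aa * h x"
definition "P' x = (d - 2) * x powr (d - 3) * (w x)\<^sup>2 - 2 * x powr (d - 2) * w x * h x"

lemma aa_pos: "aa > 0" unfolding aa_def using dgt by simp
lemma kk_pos: "kk > 0" unfolding kk_def using dgt by simp
lemma q_kk: "q = kk + 2" unfolding q_def kk_def using dgt by (simp add: field_simps)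

lemma f_cont: "continuous_on {0..} f"
  unfolding f_def using aa_pos
  by (intro continuous_intros continuous_on_powr' w_cont) auto

lemma P_cont: "continuous_on {0..} P"
  unfolding P_def using dgt
  by (intro continuous_intros continuous_on_powr' w_cont) auto

lemma f_nonneg: "0 \<le> r \<Longrightarrow> f r \<ge> 0" unfolding f_def by (simp add: w_nonneg)
lemma f0: "f 0 = 0" unfolding f_def using aa_pos by simp
lemma P0: "P 0 = 0" unfolding P_def using dgt by simp

lemma f_deriv: "0 < x \<Longrightarrow> (f has_real_derivative F' x) (at x)"
  unfolding f_def F'_def using w_at[of x]
  by (auto intro!: derivative_eq_intros)

lemma P_deriv: "0 < x \<Longrightarrow> (P has_real_derivative P' x) (at x)"
  unfolding P_def P'_def using w_at[of x]
  by (auto intro!: derivative_eq_intros simp: power2_eq_square algebra_simps)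

lemma f_tail: "R \<le> r \<Longrightarrow> f r = mi / (d - 2) * r powr (- aa)"
proof -
  assume r: "R \<le> r"
  then have r0: "r > 0" using R by simp
  have "f r = mi / (d - 2) * (r powr aa * r powr (2 - d))"
    unfolding f_def w_tail[OF r] by simp
  also have "r powr aa * r powr (2 - d) = r powr (aa + (2 - d))" by (rule powr_add[symmetric])
  also have "aa + (2 - d) = - aa" unfolding aa_def by argo
  finally show ?thesis .
qed

lemma P_tail: "R \<le> r \<Longrightarrow> P r = (mi / (d - 2))\<^sup>2 * r powr (2 - d)"
proof -
  assume r: "R \<le> r"
  then have r0: "r > 0" using R by simp
  have "P r = (mi / (d - 2))\<^sup>2 * (r powr (d - 2) * (r powr (2 - d))\<^sup>2)"
    unfolding P_def w_tail[OF r] by (simp add: power2_eq_square)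
  also have "r powr (d - 2) * (r powr (2 - d))\<^sup>2 = r powr (2 - d)"
    by (simp add: power2_eq_square flip: powr_add)
  finally show ?thesis .
qed

lemma pointwise:
  fixes \<sigma> b M phi :: real
  assumes x: "0 < x" and s: "\<sigma>\<^sup>2 = 1"
    and phi: "phi\<^sup>2 = aa\<^sup>2 * (f x)\<^sup>2 - b * (f x) powr q"
  shows "(h x)\<^sup>2 * rho x - b * (w x powr q * rho x) \<ge> \<sigma> * 2 * phi * F' x - aa * P' x"
proof -
  define t where "t = x powr aa"
  have t0: "t > 0" unfolding t_def using x by simp
  have e1: "x powr (aa - 1) = t / x" unfolding t_def using x by (simp add: powr_diff)
  have e2: "rho x = t\<^sup>2 * x"
  proof -
    have "d - 1 = aa + aa + 1" unfolding aa_def by argo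
    then have "rho x = x powr (aa + aa + 1)" unfolding rho_def by (simp only:)
    also have "\<dots> = x powr aa * x powr aa * x powr 1" by (simp only: powr_add)
    finally show ?thesis unfolding t_def using x by (simp add: power2_eq_square)
  qed
  have e3: "x powr (d - 2) = t\<^sup>2"
  proof -
    have "d - 2 = aa + aa" unfolding aa_def by argo
    then have "x powr (d - 2) = x powr (aa + aa)" by (simp only:)
    also have "\<dots> = x powr aa * x powr aa" by (simp only: powr_add)
    finally show ?thesis unfolding t_def using x by (simp add: power2_eq_square)
  qed
  have e4: "x powr (d - 3) = t\<^sup>2 / x"
  proof -
    have "d - 3 = aa + aa - 1" unfolding aa_def by argo
    then have "x powr (d - 3) = x powr (aa + aa - 1)" by (simp only:)
    also have "\<dots> = x powr aa * x powr aa / x powr 1" by (simp only: powr_add powr_diff)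
    finally show ?thesis unfolding t_def using x by (simp add: power2_eq_square)
  qed
  have e5: "(f x) powr q = t\<^sup>2 * x\<^sup>2 * w x powr q"
  proof -
    have "(f x) powr q = t powr q * w x powr q" unfolding f_def t_def
      by (rule powr_mult; use w_nonneg[of x] x in auto)
    also have "t powr q = x powr (aa * q)" unfolding t_def using x by (simp add: powr_powr)
    also have "aa * q = aa + aa + 2" unfolding aa_def q_def using dgt by (simp add: field_simps)
    also have "x powr (aa + aa + 2) = x powr aa * x powr aa * x powr 2" by (simp only: powr_add)
    also have "\<dots> = t\<^sup>2 * x\<^sup>2" unfolding t_def using x
      by (simp add: power2_eq_square)
    finally show ?thesis .
  qed
  have dd: "d - 2 = 2 * aa" unfolding aa_def by simp
  have fx: "f x = t * w x" unfolding f_def t_def ..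
  define G where "G = x * F' x"
  have G: "G = aa * t * w x - x * t * h x"
    unfolding G_def F'_def e1 t_def[symmetric] using x by (simp add: field_simps)
  have key: "(h x)\<^sup>2 * rho x - b * (w x powr q * rho x) - (\<sigma> * 2 * phi * F' x - aa * P' x)
      = (G - \<sigma> * phi)\<^sup>2 / x"
  proof -
    have "(G - \<sigma> * phi)\<^sup>2 = G\<^sup>2 - 2 * \<sigma> * G * phi + \<sigma>\<^sup>2 * phi\<^sup>2" by (simp add: power2_eq_square algebra_simps)
    also have "\<dots> = G\<^sup>2 - 2 * \<sigma> * G * phi + phi\<^sup>2" using s by simp
    finally have sq: "(G - \<sigma> * phi)\<^sup>2 = G\<^sup>2 - 2 * \<sigma> * G * phi + phi\<^sup>2" .
    have F'G: "F' x = G / x" unfolding G_def using x by simp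
    have eP: "P' x = (d - 2) * (t\<^sup>2 / x) * (w x)\<^sup>2 - 2 * t\<^sup>2 * w x * h x"
      unfolding P'_def e3 e4 by simp
    show ?thesis
      unfolding sq
      unfolding phi
      unfolding e5
      unfolding F'G eP e2 fx
      unfolding dd G using x
      by (simp add: field_simps power2_eq_square)
  qed
  have "(G - \<sigma> * phi)\<^sup>2 / x \<ge> 0" using x by simp
  then show ?thesis using key by linarith
qed

end



context radial begin

definition "Cg = sqrt pi * Gamma (d/2) / Gamma ((d+1)/2)"
definition "W = integral {0..R} (\<lambda>x. w x powr q * rho x)"

lemma q_pos: "q > 0" unfolding q_def using dgt by simp

lemma cwq: "continuous_on {0..} (\<lambda>x. w x powr q)"
  using q_pos w_nonneg by (intro continuous_on_powr' w_cont continuous_intros) auto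

lemma phi_int:
  assumes M: "M > 0"
  shows "((\<lambda>y. aa * y * sqrt (max 0 (1 - (\<bar>y\<bar> / M) powr kk))) has_integral (aa * M powr 2 * (Cg / 4))) {0..M}"
proof -
  let ?f = "\<lambda>x::real. x * sqrt (1 - x powr kk)"
  have cf: "continuous_on {0..1} ?f"
    using kk_pos by (intro continuous_intros continuous_on_powr') auto
  have sub: "((\<lambda>x. (1/M) *\<^sub>R ?f (x / M)) has_integral (integral {0/M..M/M} ?f)) {0..M}"
  proof (rule has_integral_substitution[of 0 M "\<lambda>y. y / M" 0 1 ?f "\<lambda>_. 1/M"])
    show "(\<lambda>y. y / M) ` {0..M} \<subseteq> {0..1}" using M by auto
    fix x assume "x \<in> {0..M}"
    show "((\<lambda>y. y / M) has_field_derivative 1 / M) (at x within {0..M})"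
      using M by (auto intro!: derivative_eq_intros)
  qed (use M cf in auto)
  have Bi: "integral {0..1} ?f = Beta (2/kk) (3/2) / kk"
    using beta_int[OF kk_pos] by (rule integral_unique)
  have e: "2 / kk = (d - 2) / 2" unfolding kk_def using dgt by (simp add: field_simps)
  have "Beta (2/kk) (3/2) / kk = Beta ((d - 2) / 2) (3/2) * (d - 2) / 4"
    unfolding e unfolding kk_def using dgt by simp
  also have "\<dots> = Cg / 4" unfolding Cg_def using beta_const[OF dgt] by simp
  finally have Bi': "integral {0..1} ?f = Cg / 4" using Bi by simp
  have sub2: "((\<lambda>x. (aa * M powr 2) * ((1/M) *\<^sub>R ?f (x / M))) has_integral (aa * M powr 2 * (Cg / 4))) {0..M}"
    using has_integral_mult_right[OF sub] M Bi' by simp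
  show ?thesis
  proof (rule has_integral_eq[OF _ sub2])
    fix x assume x: "x \<in> {0..M}"
    have le: "(x / M) powr kk \<le> 1" using x M kk_pos by (intro powr_le1) auto
    show "(aa * M powr 2) * ((1/M) *\<^sub>R ?f (x / M)) = aa * x * sqrt (max 0 (1 - (\<bar>x\<bar> / M) powr kk))"
      using x M le by (simp add: power2_eq_square field_simps max_def)
  qed
qed

lemma max_trick:
  assumes mi0: "mi > 0"
  shows "\<exists>M>0. J \<ge> aa * Cg * M powr 2 + aa\<^sup>2 * W * M powr (- kk)"
proof -
  obtain r0 where r0: "r0 \<in> {0..R}" and r0max: "\<And>y. y \<in> {0..R} \<Longrightarrow> f y \<le> f r0"
    using continuous_attains_sup[of "{0..R}" f] continuous_on_subset[OF f_cont, of "{0..R}"] R by auto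
  define M where "M = f r0"
  have fR: "f R > 0" using f_tail[of R] mi0 dgt R by simp
  have M0: "M > 0" using r0max[of R] fR R unfolding M_def by auto
  have fleM: "f r \<le> M" if r: "0 \<le> r" for r
  proof (cases "r \<le> R")
    case True then show ?thesis using r0max[of r] r unfolding M_def by auto
  next
    case False
    then have "r powr (- aa) \<le> R powr (- aa)" using R aa_pos by (intro powr_mono2') auto
    then have "f r \<le> f R" using f_tail[of r] f_tail[of R] False mi0 dgt
      by (auto intro!: mult_left_mono divide_right_mono)
    then show ?thesis using r0max[of R] R unfolding M_def by auto
  qed
  have r0pos: "r0 > 0"
  proof (rule ccontr)
    assume "\<not> r0 > 0" then have "r0 = 0" using r0 by auto
    then show False using M0 f0 unfolding M_def by simp
  qed
  define b where "b = aa\<^sup>2 * M powr (- kk)"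
  define ph where "ph = (\<lambda>y. aa * y * sqrt (max 0 (1 - (\<bar>y\<bar> / M) powr kk)))"
  have ph_cont: "continuous_on A ph" for A
  proof -
    have "continuous_on A (\<lambda>y. (\<bar>y\<bar> / M) powr kk)"
      using kk_pos M0 by (intro continuous_on_powr' continuous_intros) auto
    then have "continuous_on A (\<lambda>y. sqrt (max 0 (1 - (\<bar>y\<bar> / M) powr kk)))"
      by (intro continuous_on_real_sqrt continuous_on_max continuous_on_const continuous_on_diff)
    then show ?thesis unfolding ph_def by (intro continuous_on_mult continuous_on_const continuous_on_id)
  qed
  have ph_sq: "(ph y)\<^sup>2 = aa\<^sup>2 * y\<^sup>2 - b * y powr q" if y: "0 \<le> y" "y \<le> M" for y
  proof -
    have le: "(y / M) powr kk \<le> 1" using y M0 kk_pos by (intro powr_le1) auto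
    have "(ph y)\<^sup>2 = aa\<^sup>2 * y\<^sup>2 * (1 - (y / M) powr kk)"
      unfolding ph_def using y le by (simp add: power_mult_distrib max_def)
    also have "(y / M) powr kk = y powr kk * M powr (- kk)"
    proof -
      have "(y / M) powr kk = y powr kk / M powr kk" by (rule powr_divide; use y M0 in auto)
      then show ?thesis by (simp add: powr_minus divide_inverse)
    qed
    finally have e1: "(ph y)\<^sup>2 = aa\<^sup>2 * y\<^sup>2 * (1 - y powr kk * M powr (- kk))" .
    have yq: "y powr q = y powr kk * y\<^sup>2"
    proof (cases "y = 0")
      case False
      then have "y powr q = y powr kk * y powr 2" unfolding q_kk by (simp add: powr_add)
      then show ?thesis using y by (simp add: powr_numeral)
    qed (use q_pos kk_pos in simp)
    show ?thesis unfolding e1 b_def yq by (simp add: algebra_simps)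
  qed
  have ph_le: "ph y \<le> aa * y" if "0 \<le> y" for y
  proof -
    have "sqrt (max 0 (1 - (\<bar>y\<bar> / M) powr kk)) \<le> 1" by (simp add: max_def)
    then show ?thesis unfolding ph_def using that aa_pos
      by (metis mult.right_neutral mult_left_mono mult_nonneg_nonneg less_imp_le)
  qed
  define Phi where "Phi = (\<lambda>y. integral {-1..y} ph)"
  have Phi_deriv: "(Phi has_real_derivative ph y) (at y)" if y: "0 \<le> y" "y \<le> M" for y
  proof -
    have "(Phi has_real_derivative ph y) (at y within {-1..M+1})"
      unfolding Phi_def by (rule integral_has_real_derivative[OF ph_cont]) (use y in auto)
    moreover have "at y within {-1..M+1} = at y" by (rule at_within_interior) (use y in auto)
    ultimately show ?thesis by simp
  qed
  have Phi_cont: "continuous_on {0..M} Phi"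
    unfolding continuous_on_eq_continuous_within
  proof
    fix x assume "x \<in> {0..M}"
    then have "isCont Phi x" using Phi_deriv[of x] by (auto intro: DERIV_isCont)
    then show "continuous (at x within {0..M}) Phi" by (rule continuous_at_imp_continuous_within)
  qed
  have Phi_diff: "Phi y - Phi 0 = integral {0..y} ph" if "0 \<le> y" for y
  proof -
    have "integral {-1..0} ph + integral {0..y} ph = integral {-1..y} ph"
      by (rule hk_combine) (use that in \<open>auto intro: integrable_continuous_real ph_cont\<close>)
    then show ?thesis unfolding Phi_def by simp
  qed
  have PhiM: "Phi M - Phi 0 = aa * M powr 2 * (Cg / 4)"
  proof -
    have "integral {0..M} ph = aa * M powr 2 * (Cg / 4)"
      unfolding ph_def by (rule integral_unique[OF phi_int[OF M0]])
    then show ?thesis using Phi_diff[of M] M0 by simp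
  qed
  have fM: "f x \<in> {0..M}" if "0 \<le> x" for x using f_nonneg[OF that] fleM[OF that] by auto
  have cPhif: "continuous_on {0..X} (\<lambda>x. Phi (f x))" for X
    by (rule continuous_on_compose2[OF Phi_cont continuous_on_subset[OF f_cont]]) (auto simp: f_nonneg fleM)
  have cP: "continuous_on {0..X} P" for X by (rule continuous_on_subset[OF P_cont]) auto
  have dPhif: "((\<lambda>x. Phi (f x)) has_real_derivative ph (f x) * F' x) (at x)" if "0 < x" for x
    by (rule DERIV_chain2[OF Phi_deriv f_deriv]) (use fM[of x] that in auto)
  define L where "L = (\<lambda>x. (h x)\<^sup>2 * rho x - b * (w x powr q * rho x))"
  have cL: "continuous_on {0..X} L" for X
    unfolding L_def
    by (intro continuous_intros continuous_on_subset[OF h_cont sub0] continuous_on_subset[OF crho sub0]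
        continuous_on_subset[OF cwq sub0])
  have Lpt: "L x \<ge> \<sigma> * 2 * ph (f x) * F' x - aa * P' x" if "0 < x" "\<sigma>\<^sup>2 = 1" for x \<sigma>
    unfolding L_def by (rule pointwise[OF that ph_sq]) (use fM[of x] that in auto)
  have part1: "integral {0..r0} L \<ge> (2 * Phi (f r0) - aa * P r0) - (2 * Phi (f 0) - aa * P 0)"
  proof -
    have ftc: "((\<lambda>x. 1 * 2 * ph (f x) * F' x - aa * P' x) has_integral
        ((2 * Phi (f r0) - aa * P r0) - (2 * Phi (f 0) - aa * P 0))) {0..r0}"
    proof (rule fundamental_theorem_of_calculus_interior)
      show "continuous_on {0..r0} (\<lambda>x. 2 * Phi (f x) - aa * P x)"
        by (intro continuous_intros cPhif cP)
      fix x assume x: "x \<in> {0<..<r0}"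
      have "((\<lambda>x. 2 * Phi (f x) - aa * P x) has_real_derivative (1 * 2 * ph (f x) * F' x - aa * P' x)) (at x)"
        using dPhif[of x] P_deriv[of x] x by (auto intro!: derivative_eq_intros)
      then show "((\<lambda>x. 2 * Phi (f x) - aa * P x) has_vector_derivative (1 * 2 * ph (f x) * F' x - aa * P' x)) (at x)"
        by (simp add: has_real_derivative_iff_has_vector_derivative)
    qed (use r0pos in auto)
    have iL: "(L has_integral integral {0..r0} L) {0<..<r0}"
      using hasint_cont[OF cL] has_integral_Icc_iff_Ioo by blast
    show ?thesis
      by (rule has_integral_le[OF ftc[unfolded has_integral_Icc_iff_Ioo] iL])
         (use Lpt[of _ 1] in auto)
  qed
  have part2: "integral {r0..X} L \<ge> (- 2 * Phi (f X) - aa * P X) - (- 2 * Phi (f r0) - aa * P r0)"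
    if X: "X \<ge> R" for X
  proof -
    have ftc: "((\<lambda>x. (-1) * 2 * ph (f x) * F' x - aa * P' x) has_integral
        ((- 2 * Phi (f X) - aa * P X) - (- 2 * Phi (f r0) - aa * P r0))) {r0..X}"
    proof (rule fundamental_theorem_of_calculus_interior)
      show "continuous_on {r0..X} (\<lambda>x. - 2 * Phi (f x) - aa * P x)"
        by (intro continuous_intros continuous_on_subset[OF cPhif[of X]] continuous_on_subset[OF cP[of X]])
           (use r0 in auto)
      fix x assume x: "x \<in> {r0<..<X}"
      then have x0: "x > 0" using r0 by auto
      have "((\<lambda>x. - 2 * Phi (f x) - aa * P x) has_real_derivative ((-1) * 2 * ph (f x) * F' x - aa * P' x)) (at x)"
        using dPhif[OF x0] P_deriv[OF x0] by (auto intro!: derivative_eq_intros)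
      then show "((\<lambda>x. - 2 * Phi (f x) - aa * P x) has_vector_derivative ((-1) * 2 * ph (f x) * F' x - aa * P' x)) (at x)"
        by (simp add: has_real_derivative_iff_has_vector_derivative)
    qed (use r0 X in auto)
    have iL: "(L has_integral integral {r0..X} L) {r0<..<X}"
      using hasint_cont[OF continuous_on_subset[OF cL[of X]]] has_integral_Icc_iff_Ioo r0 by fastforce
    show ?thesis
      by (rule has_integral_le[OF ftc[unfolded has_integral_Icc_iff_Ioo] iL])
         (use Lpt[of _ "-1"] r0 in auto)
  qed
  have bound: "J \<ge> aa * Cg * M powr 2 + b * W - 3 * aa * P X" if X: "X \<ge> R" for X
  proof -
    have X0: "X \<ge> 0" using X R by simp
    have comb: "integral {0..r0} L + integral {r0..X} L = integral {0..X} L"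
      by (rule hk_combine) (use r0 X in \<open>auto intro: integrable_continuous_real cL\<close>)
    have c1: "continuous_on {0..X} (\<lambda>x. (h x)\<^sup>2 * rho x)"
      by (intro continuous_intros continuous_on_subset[OF h_cont sub0] continuous_on_subset[OF crho sub0])
    have c2: "continuous_on {0..X} (\<lambda>x. w x powr q * rho x)"
      by (intro continuous_intros continuous_on_subset[OF cwq sub0] continuous_on_subset[OF crho sub0])
    define WX where "WX = integral {0..X} (\<lambda>x. w x powr q * rho x)"
    have LX': "(L has_integral (I X - b * WX)) {0..X}"
      unfolding L_def I_def WX_def by (intro has_integral_diff has_integral_mult_right hasint_cont c1 c2)
    have LX: "integral {0..X} L = I X - b * WX" using LX' by (rule integral_unique)
    have WXge: "WX \<ge> W"
    proof -
      have "integral {0..R} (\<lambda>x. w x powr q * rho x) + integral {R..X} (\<lambda>x. w x powr q * rho x) = WX"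
        unfolding WX_def by (rule hk_combine) (use X R in \<open>auto intro: integrable_continuous_real c2\<close>)
      moreover have "integral {R..X} (\<lambda>x. w x powr q * rho x) \<ge> 0"
        by (rule integral_nonneg) (use R in \<open>auto intro!: integrable_continuous_real continuous_on_subset[OF c2]
            simp: rho_nonneg\<close>)
      ultimately show ?thesis unfolding W_def by simp
    qed
    have b0: "b \<ge> 0" unfolding b_def by simp
    have fX: "Phi (f X) - Phi 0 \<le> aa * P X"
    proof -
      have fX0: "0 \<le> f X" using f_nonneg X0 by simp
      have "Phi (f X) - Phi 0 = integral {0..f X} ph" by (rule Phi_diff[OF fX0])
      also have "\<dots> \<le> integral {0..f X} (\<lambda>_. aa * f X)"
      proof (rule integral_le)
        show "ph integrable_on {0..f X}" by (rule integrable_continuous_real[OF ph_cont])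
        fix y assume y: "y \<in> {0..f X}"
        then have "ph y \<le> aa * y" by (intro ph_le) auto
        also have "\<dots> \<le> aa * f X" using y aa_pos by (intro mult_left_mono) auto
        finally show "ph y \<le> aa * f X" .
      qed auto
      also have "\<dots> = aa * (f X)\<^sup>2" using fX0 by (simp add: power2_eq_square)
      also have "(f X)\<^sup>2 = P X"
      proof -
        have "(X powr aa)\<^sup>2 = X powr aa * X powr aa" by (simp add: power2_eq_square)
        also have "\<dots> = X powr (aa + aa)" by (rule powr_add[symmetric])
        also have "aa + aa = d - 2" unfolding aa_def by argo
        finally show ?thesis unfolding f_def P_def by (simp add: power_mult_distrib)
      qed
      finally show ?thesis .
    qed
    have "integral {0..X} L \<ge> (2 * Phi (f r0) - aa * P r0) - (2 * Phi (f 0) - aa * P 0)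
       + ((- 2 * Phi (f X) - aa * P X) - (- 2 * Phi (f r0) - aa * P r0))"
      using part1 part2[OF X] comb by linarith
    then have "integral {0..X} L \<ge> 4 * (Phi M - Phi 0) - 2 * (Phi (f X) - Phi 0) - aa * P X"
      using f0 P0 unfolding M_def by simp
    then have "I X - b * WX \<ge> aa * Cg * M powr 2 - 3 * aa * P X"
      using LX PhiM fX aa_pos by (simp add: algebra_simps)
    moreover have "J \<ge> I X" using P1[OF X] mi0 w_nonneg[OF X0] by simp
    moreover have "b * WX \<ge> b * W" using WXge b0 by (rule mult_left_mono)
    ultimately show ?thesis by linarith
  qed
  have lim: "((\<lambda>X. J + 3 * aa * P X) \<longlongrightarrow> J + 3 * aa * ((mi / (d - 2))\<^sup>2 * 0)) at_top"
  proof -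
    have l1: "((\<lambda>X. X powr (2 - d)) \<longlongrightarrow> 0) at_top"
      by (rule tendsto_neg_powr) (use dgt in \<open>auto intro: filterlim_ident\<close>)
    have "((\<lambda>X. J + 3 * aa * ((mi / (d - 2))\<^sup>2 * X powr (2 - d))) \<longlongrightarrow> J + 3 * aa * ((mi / (d - 2))\<^sup>2 * 0)) at_top"
      by (intro tendsto_intros l1)
    moreover have "eventually (\<lambda>X. J + 3 * aa * ((mi / (d - 2))\<^sup>2 * X powr (2 - d)) = J + 3 * aa * P X) at_top"
      using eventually_ge_at_top[of R] by eventually_elim (simp add: P_tail)
    ultimately show ?thesis by (rule Lim_transform_eventually)
  qed
  have "aa * Cg * M powr 2 + b * W \<le> J + 3 * aa * ((mi / (d - 2))\<^sup>2 * 0)"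
  proof (rule tendsto_lowerbound[OF lim])
    show "\<forall>\<^sub>F X in at_top. aa * Cg * M powr 2 + b * W \<le> J + 3 * aa * P X"
      using eventually_ge_at_top[of R] by eventually_elim (use bound in force)
  qed simp
  then show ?thesis using M0 unfolding b_def by (intro exI[of _ M]) (simp add: algebra_simps)
qed

end



context radial begin

lemma Cg_pos: "Cg > 0" unfolding Cg_def using dgt by simp

lemma W_nonneg: "W \<ge> 0"
  unfolding W_def using R
  by (intro integral_nonneg integrable_continuous_real continuous_intros continuous_on_subset[OF cwq sub0]
      continuous_on_subset[OF crho sub0]) (auto simp: rho_nonneg)

lemma N_nonneg: "N \<ge> 0"
  unfolding N_def using R
  by (intro integral_nonneg integrable_continuous_real continuous_intros continuous_on_subset[OF cuq sub0]
      continuous_on_subset[OF crho sub0]) (auto simp: rho_nonneg)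

lemma sd_eq: "sd d = 1 / (d * (d - 2) / 4 * Cg powr (2/d))"
proof -
  have "Gamma ((d + 1) / 2) / (sqrt pi * Gamma (d / 2)) = 1 / Cg" unfolding Cg_def by simp
  moreover have "(1 / Cg) powr (2/d) = 1 / Cg powr (2/d)" using Cg_pos by (simp add: powr_divide)
  ultimately show ?thesis unfolding sd_def by simp
qed

lemma sd_nonneg: "sd d \<ge> 0" unfolding sd_eq using dgt Cg_pos by simp

lemma holder_J: "J \<le> N powr ((d + 2) / (2 * d)) * W powr ((d - 2) / (2 * d))"
proof -
  define p where "p = 2 * d / (d + 2)"
  have p1: "p > 1" unfolding p_def using dgt by (simp add: field_simps)
  have q1: "q > 1" unfolding q_def using dgt by (simp add: field_simps)
  have ip: "1 / p = (d + 2) / (2 * d)" unfolding p_def by simp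
  have iq: "1 / q = (d - 2) / (2 * d)" unfolding q_def by simp
  have pq: "1 / p + 1 / q = 1" unfolding ip iq using dgt by (simp add: field_simps)
  define F where "F x = v x * rho x powr (1 / p)" for x
  define G where "G x = w x * rho x powr (1 / q)" for x
  have cF: "continuous_on {0..R} F" unfolding F_def using p1 rho_nonneg
    by (intro continuous_intros continuous_on_powr' continuous_on_subset[OF cv sub0] continuous_on_subset[OF crho sub0]) auto
  have cG: "continuous_on {0..R} G" unfolding G_def using q1 rho_nonneg
    by (intro continuous_intros continuous_on_powr' continuous_on_subset[OF w_cont sub0] continuous_on_subset[OF crho sub0]) auto
  have H: "integral {0..R} (\<lambda>x. F x * G x)
      \<le> (integral {0..R} (\<lambda>x. F x powr p)) powr (1/p) * (integral {0..R} (\<lambda>x. G x powr q)) powr (1/q)"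
    by (rule holder[OF p1 q1 pq _ cF cG]) (use R in \<open>auto simp: F_def G_def v_nonneg w_nonneg\<close>)
  have e1: "integral {0..R} (\<lambda>x. F x * G x) = J"
    unfolding J_def
  proof (rule integral_cong)
    fix x assume x: "x \<in> {0..R}"
    have "rho x powr (1 / p) * rho x powr (1 / q) = rho x"
    proof (cases "rho x = 0")
      case False
      then show ?thesis using pq rho_nonneg[of x] by (simp flip: powr_add)
    qed simp
    then show "F x * G x = v x * w x * rho x" unfolding F_def G_def by (simp add: algebra_simps)
  qed
  have e2: "integral {0..R} (\<lambda>x. F x powr p) = N"
    unfolding N_def
  proof (rule integral_cong)
    fix x assume x: "x \<in> {0..R}"
    have "F x powr p = v x powr p * (rho x powr (1 / p)) powr p"
      unfolding F_def by (rule powr_mult; simp add: v_nonneg rho_nonneg)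
    also have "(rho x powr (1 / p)) powr p = rho x" using p1 rho_nonneg[of x] by (simp add: powr_powr)
    also have "v x powr p = u x powr q"
    proof -
      have "v x powr p = u x powr ((d + 2) / (d - 2) * p)" unfolding v_def by (simp add: powr_powr)
      also have "(d + 2) / (d - 2) * p = q" unfolding p_def q_def using dgt by (auto simp: divide_simps)
      finally show ?thesis .
    qed
    finally show "F x powr p = u x powr q * rho x" .
  qed
  have e3: "integral {0..R} (\<lambda>x. G x powr q) = W"
    unfolding W_def
  proof (rule integral_cong)
    fix x assume x: "x \<in> {0..R}"
    have "G x powr q = w x powr q * (rho x powr (1 / q)) powr q"
      unfolding G_def by (rule powr_mult; use x in \<open>simp add: w_nonneg rho_nonneg\<close>)
    also have "(rho x powr (1 / q)) powr q = rho x" using q1 rho_nonneg[of x] by (simp add: powr_powr)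
    finally show "G x powr q = w x powr q * rho x" .
  qed
  show ?thesis using H unfolding e1 e2 e3 ip iq .
qed

lemma first_ineq: "J \<le> sd d * N powr (1 + 2 / d)"
proof (cases "mi > 0")
  case False
  then have mi0: "mi = 0" using mi_nonneg by simp
  have "I R = integral {0..R} (\<lambda>x. 0)"
    unfolding I_def
  proof (rule integral_cong)
    fix x assume x: "x \<in> {0..R}"
    have "m x \<le> mi" unfolding mi_def using x by (intro m_mono) auto
    then have "m x = 0" using m_nonneg[of x] mi0 by simp
    then show "(h x)\<^sup>2 * rho x = 0" unfolding h_def by simp
  qed
  then have "J = 0" using P1[of R] mi0 by simp
  then show ?thesis using sd_nonneg by simp
next
  case True
  obtain M where M0: "M > 0" and JM: "J \<ge> aa * Cg * M powr 2 + aa\<^sup>2 * W * M powr (- kk)"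
    using max_trick[OF True] by blast
  define Kc where "Kc = d * (d - 2) / 4 * Cg powr (2/d)"
  have Kc0: "Kc > 0" unfolding Kc_def using dgt Cg_pos by simp
  have lowJ: "J \<ge> Kc * W powr ((d - 2) / d)"
    using amgm[OF dgt Cg_pos M0 W_nonneg] JM unfolding Kc_def aa_def kk_def by linarith
  have upJ: "J \<le> N powr ((d + 2) / (2 * d)) * W powr ((d - 2) / (2 * d))" by (rule holder_J)
  show ?thesis
  proof (cases "J > 0")
    case False
    then show ?thesis using sd_nonneg by (smt (verit) mult_nonneg_nonneg powr_ge_zero)
  next
    case Jpos: True
    have sq: "(x powr (a / (2 * d)))\<^sup>2 = x powr (a / d)" for x a
    proof -
      have "(x powr (a / (2 * d)))\<^sup>2 = x powr (a / (2 * d)) * x powr (a / (2 * d))" by (simp add: power2_eq_square)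
      also have "\<dots> = x powr (a / (2 * d) + a / (2 * d))" by (rule powr_add[symmetric])
      also have "a / (2 * d) + a / (2 * d) = a / d" using dgt by (simp add: field_simps)
      finally show ?thesis .
    qed
    have "J\<^sup>2 \<le> (N powr ((d + 2) / (2 * d)) * W powr ((d - 2) / (2 * d)))\<^sup>2"
      using upJ Jpos by (intro power_mono) auto
    also have "\<dots> = N powr ((d + 2) / d) * W powr ((d - 2) / d)"
      by (simp add: power_mult_distrib sq)
    also have "\<dots> \<le> N powr ((d + 2) / d) * (J / Kc)"
      using lowJ Kc0 by (intro mult_left_mono) (auto simp: field_simps)
    finally have "J * J \<le> N powr ((d + 2) / d) / Kc * J" by (simp add: power2_eq_square)
    then have "J \<le> N powr ((d + 2) / d) / Kc" using Jpos mult_le_cancel_right_pos by blast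
    moreover have "(d + 2) / d = 1 + 2 / d" using dgt by (simp add: field_simps)
    moreover have "sd d = 1 / Kc" unfolding sd_eq Kc_def ..
    ultimately show ?thesis by simp
  qed
qed

end



context radial begin

lemma second_ineq: "sd d * N powr (1 + 2/d) - J \<le> sd d * N powr (4/d) * (sd d * Dn - N powr ((d - 2)/d))"
proof -
  define al where "al = sd d * N powr (2/d)"
  have sq: "0 \<le> al\<^sup>2 * Dn - 2 * al * N + J" by (rule square_ineq)
  have a2: "al\<^sup>2 = (sd d)\<^sup>2 * N powr (4/d)"
  proof -
    have "(N powr (2/d))\<^sup>2 = N powr (2/d) * N powr (2/d)" by (simp add: power2_eq_square)
    also have "\<dots> = N powr (2/d + 2/d)" by (rule powr_add[symmetric])
    finally show ?thesis unfolding al_def by (simp add: power_mult_distrib)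
  qed
  have aN: "al * N = sd d * N powr (1 + 2/d)"
  proof (cases "N = 0")
    case False
    then have "N powr (2/d) * N = N powr (2/d) * N powr 1" using N_nonneg by simp
    also have "\<dots> = N powr (2/d + 1)" by (rule powr_add[symmetric])
    also have "2/d + 1 = 1 + 2/d" by simp
    finally show ?thesis unfolding al_def by (simp add: mult.assoc)
  qed (simp add: al_def)
  have NN: "N powr (4/d) * N powr ((d - 2)/d) = N powr (1 + 2/d)"
  proof -
    have "N powr (4/d) * N powr ((d - 2)/d) = N powr (4/d + (d - 2)/d)" by (rule powr_add[symmetric])
    also have "4/d + (d - 2)/d = 1 + 2/d" using dgt by (simp add: field_simps)
    finally show ?thesis .
  qed
  have "sd d * N powr (4/d) * (sd d * Dn - N powr ((d - 2)/d))
        = (sd d)\<^sup>2 * N powr (4/d) * Dn - sd d * (N powr (4/d) * N powr ((d - 2)/d))"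
    by (simp add: power2_eq_square algebra_simps)
  also have "\<dots> = al\<^sup>2 * Dn - sd d * N powr (1 + 2/d)" unfolding NN a2 ..
  finally show ?thesis using sq aN by linarith
qed

end

theorem lemma3:
  fixes d :: real and u :: "real \<Rightarrow> real"
  assumes "d > 2"
    and "smooth_halfline u"
    and "compact_support_halfline u"
    and "\<forall>r\<ge>0. u r \<ge> 0"
  defines "v \<equiv> (\<lambda>r. u r powr ((d + 2) / (d - 2)))"
  defines "N \<equiv> (LINT r:{0<..}|lborel. u r powr (2 * d / (d - 2)) * r powr (d - 1))"
  defines "E \<equiv> sd d * N powr (1 + 2 / d)
                - (LINT r:{0<..}|lborel. v r * inv_lap d v r * r powr (d - 1))"
  shows "0 \<le> E \<and>
         E \<le> sd d * N powr (4 / d) *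
              (sd d * (LINT r:{0<..}|lborel. (deriv u r)\<^sup>2 * r powr (d - 1))
               - N powr ((d - 2) / d))"
proof -
  obtain D :: "nat \<Rightarrow> real \<Rightarrow> real" where D0: "\<And>x. x \<ge> 0 \<Longrightarrow> D 0 x = u x"
    and Dd: "\<And>n x. x \<ge> 0 \<Longrightarrow> (D n has_real_derivative D (Suc n) x) (at x within {0..})"
    using assms(2) unfolding smooth_halfline_def by blast
  obtain R0 where R0: "\<And>r. r \<ge> R0 \<Longrightarrow> u r = 0"
    using assms(3) unfolding compact_support_halfline_def by blast
  define R where "R = max R0 1"
  have du: "(u has_real_derivative D 1 x) (at x within {0..})" if x: "x \<ge> 0" for x
  proof -
    have "(D 0 has_real_derivative D 1 x) (at x within {0..})" using Dd[of x 0] x by simp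
    then show ?thesis
      by (rule has_field_derivative_transform_within[OF _ zero_less_one]) (use x D0 in auto)
  qed
  have cdu: "continuous_on {0..} (D 1)"
    unfolding continuous_on_eq_continuous_within
    using Dd[of _ 1] DERIV_continuous by (metis atLeast_iff)
  interpret X: radial d u "D 1" R
    by unfold_locales (use assms(1,4) du cdu R0 in \<open>auto simp: R_def\<close>)
  have R: "R > 0" unfolding R_def by simp
  have vv: "v = X.v" unfolding v_def X.v_def ..
  have Neq: "N = X.N"
  proof -
    have "N = integral {0..R} (\<lambda>r. u r powr X.q * X.rho r)"
      unfolding N_def
    proof (rule lint_compact(2)[OF R])
      show "continuous_on {0..R} (\<lambda>r. u r powr X.q * X.rho r)"
        by (rule continuous_on_mult[OF continuous_on_subset[OF X.cuq] continuous_on_subset[OF X.crho]]) auto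
    qed (auto simp: X.q_def X.rho_def R_def R0)
    then show ?thesis unfolding X.N_def .
  qed
  have Jeq: "(LINT r:{0<..}|lborel. v r * inv_lap d v r * r powr (d - 1)) = X.J"
  proof -
    have "(LINT r:{0<..}|lborel. v r * inv_lap d v r * r powr (d - 1)) = integral {0..R} (\<lambda>r. X.v r * X.w r * X.rho r)"
      unfolding vv
    proof (rule lint_compact(2)[OF R])
      show "continuous_on {0..R} (\<lambda>r. X.v r * X.w r * X.rho r)"
        by (rule continuous_on_mult[OF continuous_on_mult[OF continuous_on_subset[OF X.cv]
              continuous_on_subset[OF X.w_cont]] continuous_on_subset[OF X.crho]]) auto
    qed (auto simp: X.inv_lap_eq X.rho_def X.v_supp)
    then show ?thesis unfolding X.J_def .
  qed
  have Deq: "(LINT r:{0<..}|lborel. (deriv u r)\<^sup>2 * r powr (d - 1)) = X.Dn"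
  proof -
    have dd: "deriv u r = D 1 r" if r: "r > 0" for r
    proof -
      have "at r within {0..} = at r" by (rule at_within_interior) (use r in auto)
      then show ?thesis using du[of r] r by (auto intro: DERIV_imp_deriv)
    qed
    have d0: "deriv u r = 0" if r: "r > R" for r
    proof -
      have "((\<lambda>_. 0::real) has_real_derivative 0) (at r)" by simp
      then have "(u has_real_derivative 0) (at r)"
        by (rule has_field_derivative_transform_within_open[of _ _ _ "{R<..}"])
           (use r in \<open>auto simp: R_def R0\<close>)
      then show ?thesis by (rule DERIV_imp_deriv)
    qed
    have "(LINT r:{0<..}|lborel. (deriv u r)\<^sup>2 * r powr (d - 1)) = integral {0..R} (\<lambda>r. (D 1 r)\<^sup>2 * X.rho r)"
    proof (rule lint_compact(2)[OF R])
      show "continuous_on {0..R} (\<lambda>r. (D 1 r)\<^sup>2 * X.rho r)"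
        by (rule continuous_on_mult[OF continuous_on_power[OF continuous_on_subset[OF cdu]]
              continuous_on_subset[OF X.crho]]) auto
    qed (auto simp: dd d0 X.rho_def)
    then show ?thesis unfolding X.Dn_def .
  qed
  have Eeq: "E = sd d * X.N powr (1 + 2 / d) - X.J"
    unfolding E_def Neq[symmetric] Jeq ..
  show ?thesis
    unfolding Eeq Deq Neq using X.first_ineq X.second_ineq by simp
qed



end
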